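(* Let $E\subseteq\mathbb{R}$ be bounded with $\overline{\dim}_M E>0$. Then there exist $n\in\mathbb{N}$ and a linear map $T\colon\mathbb{R}^n\to\mathbb{R}$ such that $Q(T(E^n))$ is dense in $\mathbb{R}$, where for $F\subseteq\mathbb{R}$, $Q(F)=\{(a-b)/(c-d): a,b,c,d\in F,\ c\neq d\}$.
   Context: For a bounded set $E\subseteq\mathbb{R}^n$ and $r>0$, let $N(E,r)$ be the number of closed balls of radius $r$ needed to cover $E$. The upper Minkowski dimension of $E$ is $\overline{\dim}_M E=\limsup_{r\downarrow 0}\log N(E,r)/\log(1/r)$, with the convention $\log 0:=-\infty$. $E^n$ denotes the $n$-fold Cartesian power of $E$. *)

theory Defs
  imports "HOL-Analysis.Analysis"
begin

definition covering_number :: "'a::metric_space set \<Rightarrow> real \<Rightarrow> nat" where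
  "covering_number E r = (LEAST k. \<exists>C. finite C \<and> card C = k \<and> E \<subseteq> (\<Union>c\<in>C. cball c r))"

definition upper_minkowski_dim :: "'a::metric_space set \<Rightarrow> ereal" where
  "upper_minkowski_dim E = Limsup (at_right (0::real))
     (\<lambda>r. if covering_number E r = 0 then -\<infinity>
          else ereal (ln (real (covering_number E r)) / ln (1 / r)))"

definition quotient_set :: "real set \<Rightarrow> real set" where
  "quotient_set F = {(a - b) / (c - d) | a b c d. a \<in> F \<and> b \<in> F \<and> c \<in> F \<and> d \<in> F \<and> c \<noteq> d}"

text \<open>Image of E^n under the linear map T x = sum_{i<n} t_i x_i (every linear map R^n -> R has this form).\<close>
definition lin_image_power :: "(nat \<Rightarrow> real) \<Rightarrow> nat \<Rightarrow> real set \<Rightarrow> real set" where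
  "lin_image_power t n E = {(\<Sum>i<n. t i * x i) | x. \<forall>i<n. x i \<in> E}"

end

theory Submission
  imports Defs
begin


definition vv :: "nat \<Rightarrow> (nat \<Rightarrow> real) \<Rightarrow> (nat \<Rightarrow> real) \<Rightarrow> real" where
  "vv n t x = (\<Sum>i<n. t i * x i)"

definition tk :: "nat \<Rightarrow> (nat \<Rightarrow> real) \<Rightarrow> real \<Rightarrow> (nat \<Rightarrow> nat) \<Rightarrow> nat \<Rightarrow> real" where
  "tk n t0 h k i = (if i < n then t0 i + h * real (k i) else t0 i)"

lemma count_line:
  assumes P0: "\<forall>a\<in>P0. \<forall>b\<in>P0. a\<noteq>b \<longrightarrow> r < \<bar>a - b\<bar>"
    and x: "x \<in> PiE {..<n} (\<lambda>_. P0)" and y: "y \<in> PiE {..<n} (\<lambda>_. P0)" and xy: "x \<noteq> y"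
    and h: "0 < h" and hr: "2*\<rho> < h*r" and r0: "0 \<le> r"
  shows "card {k \<in> PiE {..<n} (\<lambda>_. {..<K}). \<bar>vv n (tk n t0 h k) x - vv n (tk n t0 h k) y\<bar> \<le> \<rho>} \<le> K^(n-1)"
proof -
  obtain j where j: "j < n" "x j \<noteq> y j"
  proof -
    have "\<exists>j<n. x j \<noteq> y j"
    proof (rule ccontr)
      assume "\<not> ?thesis"
      then have "x = y" using x y by (intro PiE_ext[OF x y]) auto
      then show False using xy by simp
    qed
    then show ?thesis using that by blast
  qed
  have dj: "r < \<bar>x j - y j\<bar>" using P0 x y j by (auto simp: PiE_iff)
  define S where "S = {k \<in> PiE {..<n} (\<lambda>_. {..<K}). \<bar>vv n (tk n t0 h k) x - vv n (tk n t0 h k) y\<bar> \<le> \<rho>}"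
  define g where "g k = vv n (tk n t0 h k) x - vv n (tk n t0 h k) y" for k
  have gdiff: "g k - g k' = h * (real (k j) - real (k' j)) * (x j - y j)"
    if "\<forall>i. i \<noteq> j \<longrightarrow> k i = k' i" for k k'
  proof -
    have "g k - g k' = (\<Sum>i<n. h * (real (k i) - real (k' i)) * (x i - y i))"
      unfolding g_def vv_def tk_def
      by (simp add: sum_subtractf[symmetric] algebra_simps)
    also have "\<dots> = (\<Sum>i<n. if i = j then h * (real (k j) - real (k' j)) * (x j - y j) else 0)"
      using that by (intro sum.cong) auto
    also have "\<dots> = h * (real (k j) - real (k' j)) * (x j - y j)" using j by simp
    finally show ?thesis .
  qed
  have inj: "inj_on (\<lambda>k. k(j := undefined)) S"
  proof (rule inj_onI)
    fix k k' assume kS: "k \<in> S" "k' \<in> S" and eq: "k(j := undefined) = k'(j := undefined)"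
    have oth: "\<forall>i. i \<noteq> j \<longrightarrow> k i = k' i"
      using eq by (metis fun_upd_other)
    have "k j = k' j"
    proof (rule ccontr)
      assume ne: "k j \<noteq> k' j"
      have "1 \<le> \<bar>real (k j) - real (k' j)\<bar>" using ne by linarith
      then have "1 * r \<le> \<bar>real (k j) - real (k' j)\<bar> * \<bar>x j - y j\<bar>"
        using dj r0 by (intro mult_mono) auto
      then have "h * r \<le> h * \<bar>real (k j) - real (k' j)\<bar> * \<bar>x j - y j\<bar>"
        using h by (simp add: mult.assoc mult_left_mono)
      also have "\<dots> = \<bar>g k - g k'\<bar>" using gdiff[OF oth] h by (simp add: abs_mult)
      also have "\<dots> \<le> 2*\<rho>"
      proof -
        have "\<bar>g k\<bar> \<le> \<rho>" "\<bar>g k'\<bar> \<le> \<rho>" using kS unfolding S_def g_def by simp_all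
        then show ?thesis by linarith
      qed
      finally show False using hr by linarith
    qed
    then show "k = k'" using oth by (intro ext) (metis)
  qed
  have img: "(\<lambda>k. k(j := undefined)) ` S \<subseteq> PiE ({..<n} - {j}) (\<lambda>_. {..<K})"
  proof
    fix k' assume "k' \<in> (\<lambda>k. k(j := undefined)) ` S"
    then obtain k where k: "k \<in> PiE {..<n} (\<lambda>_. {..<K})" and k': "k' = k(j := undefined)"
      unfolding S_def by blast
    show "k' \<in> PiE ({..<n} - {j}) (\<lambda>_. {..<K})"
      unfolding k' using k by (auto simp: PiE_iff extensional_def)
  qed
  have "card S = card ((\<lambda>k. k(j := undefined)) ` S)" using inj by (simp add: card_image)
  also have "\<dots> \<le> card (PiE ({..<n} - {j}) (\<lambda>_. {..<K}))"
    using img by (intro card_mono) (auto intro: finite_PiE)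
  also have "\<dots> = K^(n-1)" using j by (simp add: card_PiE)
  finally show ?thesis unfolding S_def .
qed



lemma card_filter_sum: "finite A \<Longrightarrow> card {a\<in>A. P a} = (\<Sum>a\<in>A. if P a then 1 else 0::nat)"
  by (simp add: sum.inter_filter[symmetric])

lemma local_config:
  assumes P0fin: "finite P0" and sep: "\<forall>a\<in>P0. \<forall>b\<in>P0. a\<noteq>b \<longrightarrow> r < \<bar>a - b\<bar>" and r: "0 < r"
    and P0E: "P0 \<subseteq> E" and \<delta>: "0 < \<delta>" and n1: "1 \<le> n"
    and N: "N = card P0 ^ n" and N4: "4 \<le> N" and \<rho>: "\<rho> = \<delta> * r / (16 * N)"
  shows "\<exists>t. (\<forall>i<n. \<bar>t i - t0 i\<bar> \<le> \<delta>) \<and> (\<forall>i. n \<le> i \<longrightarrow> t i = t0 i) \<and>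
    (\<exists>X. finite X \<and> X \<subseteq> {x. \<forall>i<n. x i \<in> E} \<and> 2 \<le> card X \<and>
      (\<forall>x\<in>X. \<forall>y\<in>X. x\<noteq>y \<longrightarrow> \<rho> < \<bar>vv n t x - vv n t y\<bar>) \<and> 3 * N \<le> 4 * card X)"
proof -
  define X0 where "X0 = PiE {..<n} (\<lambda>_::nat. P0)"
  have X0fin: "finite X0" unfolding X0_def using P0fin by (intro finite_PiE) auto
  have cX0: "card X0 = N" unfolding X0_def N by (simp add: card_PiE)
  define K where "K = 4 * N"
  define h where "h = \<delta> / K"
  have Npos: "0 < N" using N4 by simp
  have Kpos: "0 < K" using Npos K_def by simp
  have h0: "0 < h" using \<delta> Kpos by (simp add: h_def)
  have hr: "2 * \<rho> < h * r"
  proof -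
    have "2 * \<rho> = \<delta> * r / (8 * N)" using \<rho> by simp
    also have "\<dots> < \<delta> * r / (4 * N)" using \<delta> r Npos by (intro divide_strict_left_mono) auto
    also have "\<dots> = h * r" unfolding h_def K_def by simp
    finally show ?thesis .
  qed
  define Gr where "Gr = PiE {..<n} (\<lambda>_::nat. {..<K})"
  have Grfin: "finite Gr" unfolding Gr_def by (intro finite_PiE) auto
  have cGr: "card Gr = K^n" unfolding Gr_def by (simp add: card_PiE)
  define Off where "Off = {p \<in> X0 \<times> X0. fst p \<noteq> snd p}"
  have Offfin: "finite Off" unfolding Off_def using X0fin by auto
  define cond where "cond k p = (\<bar>vv n (tk n t0 h k) (fst p) - vv n (tk n t0 h k) (snd p)\<bar> \<le> \<rho>)" for k p
  define bad where "bad k = {p \<in> Off. cond k p}" for k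
  have sumbad: "(\<Sum>k\<in>Gr. card (bad k)) \<le> N^2 * K^(n-1)"
  proof -
    have "(\<Sum>k\<in>Gr. card (bad k)) = (\<Sum>k\<in>Gr. \<Sum>p\<in>Off. if cond k p then 1 else 0)"
      unfolding bad_def by (rule sum.cong[OF refl], rule card_filter_sum[OF Offfin])
    also have "\<dots> = (\<Sum>p\<in>Off. \<Sum>k\<in>Gr. if cond k p then 1 else 0)" by (rule sum.swap)
    also have "\<dots> = (\<Sum>p\<in>Off. card {k\<in>Gr. cond k p})" by (rule sum.cong[OF refl], rule card_filter_sum[OF Grfin, symmetric])
    also have "\<dots> \<le> (\<Sum>p\<in>Off. K^(n-1))"
    proof (rule sum_mono)
      fix p assume p: "p \<in> Off"
      show "card {k\<in>Gr. cond k p} \<le> K^(n-1)"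
        unfolding Gr_def cond_def
        using count_line[OF sep _ _ _ h0 hr, of "fst p" n "snd p" K t0] p r
        unfolding Off_def X0_def by auto
    qed
    also have "\<dots> = card Off * K^(n-1)" by simp
    also have "\<dots> \<le> N^2 * K^(n-1)"
    proof -
      have "card Off \<le> card (X0 \<times> X0)" unfolding Off_def using X0fin by (intro card_mono) auto
      then have "card Off \<le> N^2" using cX0 by (simp add: card_cartesian_product power2_eq_square)
      then show ?thesis by simp
    qed
    finally show ?thesis .
  qed
  obtain k where kGr: "k \<in> Gr" and kb: "K * card (bad k) \<le> N^2"
  proof -
    have "\<exists>k\<in>Gr. K * card (bad k) \<le> N^2"
    proof (rule ccontr)
      assume "\<not> ?thesis"
      then have lt: "\<And>k. k \<in> Gr \<Longrightarrow> N^2 < K * card (bad k)" by auto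
      have "Gr \<noteq> {}" using cGr Kpos by auto
      then have "(\<Sum>k\<in>Gr. N^2) < (\<Sum>k\<in>Gr. K * card (bad k))"
        using lt Grfin by (intro sum_strict_mono) auto
      also have "\<dots> = K * (\<Sum>k\<in>Gr. card (bad k))" by (simp add: sum_distrib_left)
      also have "\<dots> \<le> K * (N^2 * K^(n-1))" using sumbad by simp
      also have "\<dots> = N^2 * K^n" using n1 by (cases n) auto
      finally show False using cGr by (simp add: mult.commute)
    qed
    then show ?thesis using that by blast
  qed
  have kb4: "4 * card (bad k) \<le> N"
  proof -
    have "N * (4 * card (bad k)) \<le> N * N" using kb unfolding K_def by (simp add: power2_eq_square mult.assoc)
    then show ?thesis using Npos by simp
  qed
  define t where "t = tk n t0 h k"
  define P where "P = {x \<in> X0. \<forall>y\<in>X0. y \<noteq> x \<longrightarrow> \<rho> < \<bar>vv n t x - vv n t y\<bar>}"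
  have Pfin: "finite P" unfolding P_def using X0fin by auto
  have sub: "X0 - P \<subseteq> fst ` bad k"
  proof
    fix x assume x: "x \<in> X0 - P"
    then obtain y where y: "y \<in> X0" "y \<noteq> x" "\<bar>vv n t x - vv n t y\<bar> \<le> \<rho>"
      unfolding P_def by auto
    then have "(x, y) \<in> bad k" using x unfolding bad_def Off_def cond_def t_def by auto
    then show "x \<in> fst ` bad k" by force
  qed
  have badfin: "finite (bad k)" unfolding bad_def using Offfin by auto
  have "card (X0 - P) \<le> card (bad k)"
    using card_mono[OF finite_imageI[OF badfin] sub] card_image_le[OF badfin, of fst] by linarith
  moreover have PX0: "P \<subseteq> X0" unfolding P_def by blast
  moreover have "card (X0 - P) = N - card P" using cX0 card_Diff_subset[OF Pfin PX0] by simp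
  moreover have "card P \<le> N" using cX0 card_mono[OF X0fin PX0] by simp
  ultimately have cP: "3 * N \<le> 4 * card P" using kb4 by linarith
  show ?thesis
  proof (intro exI conjI allI impI)
    fix i assume i: "i < n"
    have "k i < K" using kGr i unfolding Gr_def by auto
    then have "real (k i) \<le> real K - 1" by linarith
    then have "h * real (k i) \<le> h * (real K - 1)" using h0 by (simp add: mult_left_mono)
    also have "\<dots> \<le> \<delta>" using Kpos \<delta> unfolding h_def by (simp add: field_simps)
    finally show "\<bar>t i - t0 i\<bar> \<le> \<delta>" using i h0 unfolding t_def tk_def by simp
  next
    fix i assume "n \<le> i" then show "t i = t0 i" unfolding t_def tk_def by simp
  next
    show "finite P" by (rule Pfin)
    show "P \<subseteq> {x. \<forall>i<n. x i \<in> E}" unfolding P_def X0_def using P0E by (auto simp: PiE_iff)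
    show "2 \<le> card P" using cP N4 by linarith
    show "\<forall>x\<in>P. \<forall>y\<in>P. x \<noteq> y \<longrightarrow> \<rho> < \<bar>vv n t x - vv n t y\<bar>" unfolding P_def by auto
    show "3 * N \<le> 4 * card P" by (rule cP)
  qed
qed



lemma floor_eq_dist: "\<lfloor>a::real\<rfloor> = \<lfloor>b\<rfloor> \<Longrightarrow> \<bar>a - b\<bar> < 1"
  by linarith

lemma ratio_dense:
  fixes v :: "'a \<Rightarrow> real"
  assumes H: "\<And>m::nat. \<exists>X \<rho> lL. finite X \<and> X \<subseteq> A \<and> 2 \<le> card X \<and> 0<\<rho> \<and> 0<lL \<and>
     (\<forall>x\<in>X. \<forall>y\<in>X. x\<noteq>y \<longrightarrow> \<rho> < \<bar>v x - v y\<bar>) \<and> (\<forall>x\<in>X. \<forall>y\<in>X. \<bar>v x - v y\<bar> < lL) \<and>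
     real m * lL < real (card X)^2 * \<rho>"
  shows "closure (quotient_set (v ` A)) = UNIV"
proof -
  have "z \<in> closure (quotient_set (v ` A))" for z
  proof (unfold closure_approachable, intro allI impI)
    fix \<epsilon> :: real assume "0 < \<epsilon>"
    define e' where "e' = min \<epsilon> 1"
    have e': "0 < e'" "e' \<le> \<epsilon>" "e' \<le> 1" using \<open>0<\<epsilon>\<close> by (auto simp: e'_def)
    define m where "m = nat \<lceil>4*(1+\<bar>z\<bar>)/e'\<rceil> + 3"
    have mge: "4*(1+\<bar>z\<bar>)/e' + 3 \<le> real m"
    proof -
      have "4*(1+\<bar>z\<bar>)/e' \<le> real (nat \<lceil>4*(1+\<bar>z\<bar>)/e'\<rceil>)" by (simp add: real_nat_ceiling_ge)
      then show ?thesis unfolding m_def by simp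
    qed
    obtain X \<rho> lL where P: "finite X \<and> X \<subseteq> A \<and> 2 \<le> card X \<and> 0<\<rho> \<and> 0<lL \<and>
     (\<forall>x\<in>X. \<forall>y\<in>X. x\<noteq>y \<longrightarrow> \<rho> < \<bar>v x - v y\<bar>) \<and> (\<forall>x\<in>X. \<forall>y\<in>X. \<bar>v x - v y\<bar> < lL) \<and>
     real m * lL < real (card X)^2 * \<rho>"
      using H[of m] by (elim exE) (rule that)
    from P have X: "finite X" "X \<subseteq> A" "2 \<le> card X" "0<\<rho>" "0<lL"
      and sep: "\<forall>x\<in>X. \<forall>y\<in>X. x\<noteq>y \<longrightarrow> \<rho> < \<bar>v x - v y\<bar>"
      and diam: "\<forall>x\<in>X. \<forall>y\<in>X. \<bar>v x - v y\<bar> < lL"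
      and q: "real m * lL < real (card X)^2 * \<rho>" by simp_all
    have "\<not> card X \<le> Suc 0" using X(3) by simp
    then obtain x1 y1 where xy1: "x1 \<in> X" "y1 \<in> X" "x1 \<noteq> y1"
      using card_le_Suc0_iff_eq[OF X(1)] by blast
    have rl: "\<rho> < lL" using sep xy1 diam by (meson less_trans)
    obtain x0 where x0: "x0 \<in> X" using xy1 by blast
    define h where "h = e' * \<rho> / 2"
    have h: "0 < h" "h < \<rho>" using e' X(4) by (auto simp: h_def)
    define \<phi> where "\<phi> p = v (fst p) - z * v (snd p) - (v x0 - z * v x0)" for p
    have phib: "\<bar>\<phi> p\<bar> < (1+\<bar>z\<bar>)*lL" if "p \<in> X \<times> X" for p
    proof -
      have a: "\<bar>v (fst p) - v x0\<bar> < lL" "\<bar>v (snd p) - v x0\<bar> < lL" using diam that x0 by auto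
      have "\<bar>z * (v (snd p) - v x0)\<bar> \<le> \<bar>z\<bar> * lL"
        using a(2) by (simp add: abs_mult mult_left_mono)
      moreover have "\<phi> p = (v (fst p) - v x0) - z * (v (snd p) - v x0)"
        by (simp add: \<phi>_def algebra_simps)
      ultimately show ?thesis using a(1) abs_triangle_ineq4[of "v (fst p) - v x0" "z * (v (snd p) - v x0)"] by (simp add: algebra_simps)
    qed
    define K where "K = \<lceil>(1+\<bar>z\<bar>)*lL/h\<rceil>"
    define idx where "idx p = \<lfloor>\<phi> p / h\<rfloor>" for p
    have idx_in: "idx p \<in> {-K..K}" if "p \<in> X \<times> X" for p
    proof -
      have a: "\<phi> p < (1+\<bar>z\<bar>)*lL" "- ((1+\<bar>z\<bar>)*lL) < \<phi> p"
        using phib[OF that] by (auto simp: abs_less_iff)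
      have "\<phi> p / h < (1+\<bar>z\<bar>)*lL/h" "(- ((1+\<bar>z\<bar>)*lL))/h < \<phi> p / h"
        using divide_strict_right_mono[OF a(1) h(1)] divide_strict_right_mono[OF a(2) h(1)] by auto
      then have "\<phi> p / h < (1+\<bar>z\<bar>)*lL/h" "- ((1+\<bar>z\<bar>)*lL/h) < \<phi> p / h" by auto
      then have "-K \<le> idx p" "idx p \<le> K" unfolding idx_def K_def by linarith+
      then show ?thesis by simp
    qed
    have Kb: "real_of_int K < (1+\<bar>z\<bar>)*lL/h + 1" unfolding K_def by linarith
    have card_lt: "card {-K..K} < card (X \<times> X)"
    proof -
      have "0 \<le> (1+\<bar>z\<bar>)*lL/h" using h X by (intro divide_nonneg_pos) auto
      then have K0: "0 \<le> K" unfolding K_def by linarith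
      have c1: "real (card {-K..K}) = 2*real_of_int K + 1" using K0 by simp
      have "2*real_of_int K + 1 < 2*((1+\<bar>z\<bar>)*lL/h) + 3" using Kb by linarith
      also have "2*((1+\<bar>z\<bar>)*lL/h) = 4*(1+\<bar>z\<bar>)*lL/(e'*\<rho>)"
        unfolding h_def using e' X(4) by (simp add: field_simps)
      finally have "2*real_of_int K + 1 < 4*(1+\<bar>z\<bar>)*lL/(e'*\<rho>) + 3" .
      also have "\<dots> < real (card X)^2"
      proof -
        have "(4*(1+\<bar>z\<bar>)/e' + 3) * lL \<le> real m * lL" using mge X(5) by (simp add: mult_right_mono)
        then have "(4*(1+\<bar>z\<bar>)/e' + 3) * lL < real (card X)^2 * \<rho>" using q by linarith
        then have "(4*(1+\<bar>z\<bar>)/e' + 3) * lL / \<rho> < real (card X)^2"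
          using X(4) by (simp add: pos_divide_less_eq)
        moreover have "4*(1+\<bar>z\<bar>)*lL/(e'*\<rho>) + 3 \<le> (4*(1+\<bar>z\<bar>)/e' + 3) * lL / \<rho>"
          using rl X(4) e' by (simp add: field_simps)
        ultimately show ?thesis by linarith
      qed
      finally have "real (card {-K..K}) < real (card X * card X)"
        using c1 by (simp add: power2_eq_square)
      then have "card {-K..K} < card X * card X" by (simp only: of_nat_less_iff)
      then show ?thesis by (simp add: card_cartesian_product)
    qed
    have "\<not> inj_on idx (X \<times> X)"
    proof
      assume "inj_on idx (X \<times> X)"
      then have "card (X \<times> X) \<le> card {-K..K}"
        using idx_in by (intro card_inj_on_le) auto
      then show False using card_lt by simp
    qed
    then obtain p p' where pp: "p \<in> X \<times> X" "p' \<in> X \<times> X" "p \<noteq> p'" "idx p = idx p'"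
      unfolding inj_on_def by blast
    have "\<bar>\<phi> p / h - \<phi> p' / h\<bar> < 1" using pp(4) unfolding idx_def by (rule floor_eq_dist)
    then have close: "\<bar>\<phi> p - \<phi> p'\<bar> < h" using h
      by (simp add: abs_divide diff_divide_distrib[symmetric])
    obtain a c b d where ac: "p = (a,c)" "p' = (b,d)" by (cases p, cases p')
    have eq: "\<phi> p - \<phi> p' = (v a - v b) - z * (v c - v d)" unfolding \<phi>_def ac by (simp add: algebra_simps)
    have abcd: "a \<in> X" "b \<in> X" "c \<in> X" "d \<in> X" using pp ac by auto
    have "c \<noteq> d"
    proof
      assume "c = d"
      then have "a \<noteq> b" using pp(3) ac by auto
      then have "\<rho> < \<bar>v a - v b\<bar>" using sep abcd by auto
      moreover have "\<bar>v a - v b\<bar> < h" using close eq \<open>c = d\<close> by simp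
      ultimately show False using h by linarith
    qed
    then have cd: "\<rho> < \<bar>v c - v d\<bar>" using sep abcd by auto
    then have vcd: "v c \<noteq> v d" using X(4) by auto
    define qq where "qq = (v a - v b) / (v c - v d)"
    have "qq \<in> quotient_set (v ` A)"
      unfolding quotient_set_def qq_def using abcd X(2) vcd by blast
    moreover have "dist qq z < \<epsilon>"
    proof -
      have "qq - z = ((v a - v b) - z * (v c - v d)) / (v c - v d)"
        unfolding qq_def using vcd by (simp add: field_simps)
      then have "\<bar>qq - z\<bar> = \<bar>\<phi> p - \<phi> p'\<bar> / \<bar>v c - v d\<bar>" using eq by (simp add: abs_divide)
      also have "\<dots> \<le> h / \<rho>"
        using close cd h X(4) by (intro frac_le) auto
      also have "\<dots> = e'/2" using X(4) by (simp add: h_def)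
      finally show ?thesis using e' by (simp add: dist_real_def)
    qed
    ultimately show "\<exists>y\<in>quotient_set (v ` A). dist y z < \<epsilon>" by blast
  qed
  then show ?thesis by auto
qed



lemma packing:
  fixes E :: "real set"
  assumes r: "0 < r"
  shows "k \<le> covering_number E r \<Longrightarrow> \<exists>S. S \<subseteq> E \<and> finite S \<and> card S = k \<and>
           (\<forall>a\<in>S. \<forall>b\<in>S. a\<noteq>b \<longrightarrow> r < \<bar>a - b\<bar>)"
proof (induction k)
  case 0
  then show ?case by (intro exI[of _ "{}"]) auto
next
  case (Suc k)
  then obtain S where S: "S \<subseteq> E" "finite S" "card S = k" "\<forall>a\<in>S. \<forall>b\<in>S. a\<noteq>b \<longrightarrow> r < \<bar>a - b\<bar>"
    by auto
  have "\<not> E \<subseteq> (\<Union>c\<in>S. cball c r)"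
  proof
    assume "E \<subseteq> (\<Union>c\<in>S. cball c r)"
    then have "covering_number E r \<le> k"
      unfolding covering_number_def using S by (intro Least_le) blast
    then show False using Suc.prems by simp
  qed
  then obtain e where e0: "e \<in> E" "e \<notin> (\<Union>c\<in>S. cball c r)" by blast
  then have e: "e \<in> E" "\<forall>c\<in>S. r < \<bar>c - e\<bar>" by (auto simp: dist_real_def not_le)
  have eS: "e \<notin> S" using e r by auto
  show ?case
  proof (intro exI[of _ "insert e S"] conjI)
    show "insert e S \<subseteq> E" using S e by auto
    show "finite (insert e S)" using S by auto
    show "card (insert e S) = Suc k" using S eS by simp
    show "\<forall>a\<in>insert e S. \<forall>b\<in>insert e S. a \<noteq> b \<longrightarrow> r < \<bar>a - b\<bar>"
      using S(4) e(2) by (auto simp: abs_minus_commute)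
  qed
qed

lemma vv_bound:
  assumes "\<forall>i<n. \<bar>t i - t0 i\<bar> \<le> \<delta>" "\<forall>i<n. \<bar>x i\<bar> \<le> L"
  shows "\<bar>vv n t x\<bar> \<le> ((\<Sum>i<n. \<bar>t0 i\<bar>) + n * \<delta>) * L"
proof -
  have "\<bar>vv n t x\<bar> \<le> (\<Sum>i<n. \<bar>t i * x i\<bar>)" unfolding vv_def by (rule sum_abs)
  also have "\<dots> \<le> (\<Sum>i<n. (\<bar>t0 i\<bar> + \<delta>) * L)"
  proof (rule sum_mono)
    fix i assume "i \<in> {..<n}"
    then have i: "i < n" by simp
    have b: "\<bar>t i - t0 i\<bar> \<le> \<delta>" using assms(1) i by blast
    have a: "\<bar>t i\<bar> \<le> \<bar>t0 i\<bar> + \<delta>" using b by linarith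
    have a2: "\<bar>x i\<bar> \<le> L" using assms(2) i by blast
    have "\<bar>t i\<bar> * \<bar>x i\<bar> \<le> (\<bar>t0 i\<bar> + \<delta>) * L"
      using a a2 by (rule mult_mono) (use a in linarith, simp)
    then show "\<bar>t i * x i\<bar> \<le> (\<bar>t0 i\<bar> + \<delta>) * L" by (simp add: abs_mult)
  qed
  also have "\<dots> = (\<Sum>i<n. \<bar>t0 i\<bar> + \<delta>) * L" by (rule sum_distrib_right[symmetric])
  also have "(\<Sum>i<n. \<bar>t0 i\<bar> + \<delta>) = (\<Sum>i<n. \<bar>t0 i\<bar>) + n * \<delta>" by (simp add: sum.distrib)
  finally show ?thesis .
qed

definition good :: "real set \<Rightarrow> nat \<Rightarrow> nat \<Rightarrow> (nat \<Rightarrow> real) \<Rightarrow> bool" where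
  "good E n m t = (\<exists>X \<rho> l. finite X \<and> X \<subseteq> {x. \<forall>i<n. x i \<in> E} \<and> 2 \<le> card X \<and> 0<\<rho> \<and> 0<l \<and>
     (\<forall>x\<in>X. \<forall>y\<in>X. x\<noteq>y \<longrightarrow> \<rho> < \<bar>vv n t x - vv n t y\<bar>) \<and> (\<forall>x\<in>X. \<forall>y\<in>X. \<bar>vv n t x - vv n t y\<bar> < l) \<and>
     real m * l < real (card X)^2 * \<rho>)"

lemma good_open: "open {t. good E n m t}"
proof -
  define S where "S X \<rho> l = {t. \<forall>p\<in>X\<times>X. (fst p \<noteq> snd p \<longrightarrow> \<rho> < \<bar>vv n t (fst p) - vv n t (snd p)\<bar>) \<and>
      \<bar>vv n t (fst p) - vv n t (snd p)\<bar> < l}" for X \<rho> l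
  have cont: "continuous_on UNIV (\<lambda>t. \<bar>vv n t x - vv n t y\<bar>)" for x y
    unfolding vv_def by (intro continuous_intros continuous_on_product_coordinates)
  have Sopen: "open (S X \<rho> l)" if "finite X" for X \<rho> l
  proof -
    have "S X \<rho> l = (\<Inter>p\<in>X\<times>X. {t. fst p \<noteq> snd p \<longrightarrow> \<rho> < \<bar>vv n t (fst p) - vv n t (snd p)\<bar>} \<inter>
        {t. \<bar>vv n t (fst p) - vv n t (snd p)\<bar> < l})"
      unfolding S_def by auto
    also have "open \<dots>"
    proof (intro open_INT ballI open_Int)
      show "finite (X \<times> X)" using that by simp
      fix p :: "(nat \<Rightarrow> real) \<times> (nat \<Rightarrow> real)"
      show "open {t. \<bar>vv n t (fst p) - vv n t (snd p)\<bar> < l}"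
        by (rule open_Collect_less[OF cont continuous_on_const])
      show "open {t. fst p \<noteq> snd p \<longrightarrow> \<rho> < \<bar>vv n t (fst p) - vv n t (snd p)\<bar>}"
      proof (cases "fst p = snd p")
        case True then show ?thesis by simp
      next
        case False then show ?thesis
          using open_Collect_less[OF continuous_on_const cont, of \<rho> "fst p" "snd p"] by simp
      qed
    qed
    finally show ?thesis .
  qed
  have "{t. good E n m t} = (\<Union>Y\<in>{(X,\<rho>,l). finite X \<and> X \<subseteq> {x. \<forall>i<n. x i \<in> E} \<and> 2 \<le> card X \<and> 0<\<rho> \<and> 0<l \<and>
     real m * l < real (card X)^2 * \<rho>}. S (fst Y) (fst (snd Y)) (snd (snd Y)))"
    unfolding good_def S_def by (auto; blast)
  also have "open \<dots>" using Sopen by (intro open_UN) auto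
  finally show ?thesis .
qed

lemma local_good:
  fixes E :: "real set"
  assumes EL: "\<forall>x\<in>E. \<bar>x\<bar> \<le> L" and L: "0 < L" and n1: "1 \<le> n" and s: "0 < s" and ns: "2 \<le> real n * s"
    and freq: "\<And>b. 0 < b \<Longrightarrow> \<exists>r. 0<r \<and> r<b \<and> covering_number E r \<noteq> 0 \<and> s * ln (1/r) < ln (real (covering_number E r))"
    and \<delta>: "0 < \<delta>"
  shows "\<exists>t. (\<forall>i<n. \<bar>t i - t0 i\<bar> \<le> \<delta>) \<and> (\<forall>i. n \<le> i \<longrightarrow> t i = t0 i) \<and> good E n m t"
proof -
  define C0 where "C0 = ((\<Sum>i<n. \<bar>t0 i\<bar>) + n * \<delta>) * L"
  have C0: "0 \<le> C0" unfolding C0_def using L \<delta> by (intro mult_nonneg_nonneg add_nonneg_nonneg sum_nonneg) auto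
  define l where "l = 2 * C0 + 1"
  have l: "0 < l" using C0 by (simp add: l_def)
  define b where "b = min (1/2) (9*\<delta>/(256*(m*l+1)))"
  have ml: "0 < real m * l + 1" using l by (simp add: add_nonneg_pos)
  have b: "0 < b" unfolding b_def using \<delta> ml by simp
  obtain r where r: "0 < r" "r < b" and M0: "covering_number E r \<noteq> 0"
    and Ml: "s * ln (1/r) < ln (real (covering_number E r))"
    using freq[OF b] by blast
  define M where "M = covering_number E r"
  define N where "N = M ^ n"
  have r2: "r < 1/2" using r unfolding b_def by simp
  have lnr: "0 < ln (1/r)" using r r2 by simp
  have Mpos: "0 < real M" using M0 M_def by simp
  have NR: "(1/r)^2 < real N"
  proof -
    have "ln ((1/r)^2) = 2 * ln (1/r)" using r by (simp add: ln_realpow)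
    also have "\<dots> \<le> real n * s * ln (1/r)" using mult_right_mono[OF ns, of "ln (1/r)"] lnr by simp
    also have "\<dots> < real n * ln (real M)"
    proof -
      have "real n * (s * ln (1/r)) < real n * ln (real M)"
        using mult_strict_left_mono[OF Ml, of "real n"] n1 unfolding M_def by simp
      then show ?thesis by (simp add: mult.assoc)
    qed
    also have "\<dots> = ln (real N)" unfolding N_def using Mpos by (simp add: ln_realpow)
    finally show ?thesis using Mpos r unfolding N_def by (simp add: ln_less_cancel_iff)
  qed
  have "4 < (1/r)^2"
  proof -
    have "2 < 1/r" using r r2 by (simp add: field_simps)
    then have "2^2 < (1/r)^2" by (intro power_strict_mono) auto
    then show ?thesis by simp
  qed
  then have N4: "4 \<le> N" using NR by linarith
  obtain P0 where P0: "P0 \<subseteq> E" "finite P0" "card P0 = M" "\<forall>a\<in>P0. \<forall>b\<in>P0. a\<noteq>b \<longrightarrow> r < \<bar>a - b\<bar>"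
    using packing[OF r(1), of M E] unfolding M_def by auto
  define \<rho> where "\<rho> = \<delta> * r / (16 * N)"
  obtain t X where t: "\<forall>i<n. \<bar>t i - t0 i\<bar> \<le> \<delta>" "\<forall>i. n \<le> i \<longrightarrow> t i = t0 i"
    and X: "finite X" "X \<subseteq> {x. \<forall>i<n. x i \<in> E}" "2 \<le> card X"
      "\<forall>x\<in>X. \<forall>y\<in>X. x\<noteq>y \<longrightarrow> \<rho> < \<bar>vv n t x - vv n t y\<bar>" "3 * N \<le> 4 * card X"
    using local_config[OF P0(2) P0(4) r(1) P0(1) \<delta> n1 _ N4 \<rho>_def, of t0] P0(3) unfolding N_def by blast
  have \<rho>0: "0 < \<rho>" unfolding \<rho>_def using \<delta> r N4 by simp
  have diam: "\<forall>x\<in>X. \<forall>y\<in>X. \<bar>vv n t x - vv n t y\<bar> < l"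
  proof (intro ballI)
    fix x y assume xy: "x \<in> X" "y \<in> X"
    have "\<bar>vv n t x\<bar> \<le> C0" "\<bar>vv n t y\<bar> \<le> C0" unfolding C0_def
      using vv_bound[OF t(1)] xy X(2) EL by auto
    then show "\<bar>vv n t x - vv n t y\<bar> < l" unfolding l_def by linarith
  qed
  have q: "real m * l < real (card X)^2 * \<rho>"
  proof -
    have cX: "3/4 * real N \<le> real (card X)" using X(5) by linarith
    have "(3/4 * real N)^2 \<le> real (card X)^2" using cX N4 by (intro power_mono) auto
    then have "(3/4 * real N)^2 * \<rho> \<le> real (card X)^2 * \<rho>" using \<rho>0 by (simp add: mult_right_mono)
    moreover have "(3/4 * real N)^2 * \<rho> = 9/256 * \<delta> * (real N * r)"
      unfolding \<rho>_def using N4 by (simp add: field_simps power2_eq_square)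
    moreover have "1/r \<le> real N * r"
    proof -
      have "(1/r)^2 * r \<le> real N * r" using NR r by (simp add: mult_right_mono)
      then show ?thesis using r by (simp add: power2_eq_square)
    qed
    moreover have "real m * l + 1 < 9/256 * \<delta> * (1/r)"
    proof -
      have "r < 9*\<delta>/(256*(m*l+1))" using r unfolding b_def by simp
      then have "r * (256*(m*l+1)) < 9*\<delta>" using ml by (simp add: pos_less_divide_eq)
      then show ?thesis using r by (simp add: field_simps)
    qed
    moreover have "9/256 * \<delta> * (1/r) \<le> 9/256 * \<delta> * (real N * r)"
      using calculation(3) \<delta> by (intro mult_left_mono) auto
    ultimately show ?thesis by linarith
  qed
  show ?thesis
    unfolding good_def using t X(1-4) \<rho>0 l diam q by blast
qed

theorem main_result:
  fixes E :: "real set"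
  assumes "bounded E"
    and "upper_minkowski_dim E > 0"
  shows "\<exists>(n::nat) (t::nat \<Rightarrow> real). closure (quotient_set (lin_image_power t n E)) = UNIV"
proof -
  obtain L0 where L0: "\<forall>x\<in>E. norm x \<le> L0" using assms(1) bounded_iff by blast
  define L where "L = max L0 1"
  have EL: "\<forall>x\<in>E. \<bar>x\<bar> \<le> L" and L: "0 < L" using L0 unfolding L_def by force+
  obtain s where s0: "0 < ereal s" and sd: "ereal s < upper_minkowski_dim E"
    using ereal_dense2[OF assms(2)] by blast
  have s: "0 < s" using s0 by simp
  define n where "n = nat \<lceil>2/s\<rceil> + 1"
  have n1: "1 \<le> n" unfolding n_def by simp
  have ns: "2 \<le> real n * s"
  proof -
    have "2/s \<le> real n" unfolding n_def by linarith
    then show ?thesis using s by (simp add: field_simps)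
  qed
  define f where "f r = (if covering_number E r = 0 then -\<infinity>
          else ereal (ln (real (covering_number E r)) / ln (1 / r)))" for r :: real
  have fr: "\<exists>r. 0<r \<and> r<b \<and> ereal s < f r" if b: "0 < b" for b
  proof (rule ccontr)
    assume "\<not> ?thesis"
    then have "\<forall>y>0. y < b \<longrightarrow> f y \<le> ereal s" by (meson not_less)
    then have "eventually (\<lambda>r. f r \<le> ereal s) (at_right (0::real))"
      unfolding eventually_at_right_field using b by blast
    then have "Limsup (at_right (0::real)) f \<le> ereal s" by (rule Limsup_bounded)
    then show False using sd unfolding upper_minkowski_dim_def f_def by simp
  qed
  have freq: "\<exists>r. 0<r \<and> r<b \<and> covering_number E r \<noteq> 0 \<and> s * ln (1/r) < ln (real (covering_number E r))"
    if b: "0 < b" for b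
  proof -
    obtain r where r: "0 < r" "r < min b (1/2)" "ereal s < f r" using fr[of "min b (1/2)"] b by auto
    have lnr: "0 < ln (1/r)" using r by simp
    have M0: "covering_number E r \<noteq> 0" using r(3) unfolding f_def by (auto split: if_splits)
    then have "s < ln (real (covering_number E r)) / ln (1/r)" using r(3) unfolding f_def by simp
    then have "s * ln (1/r) < ln (real (covering_number E r))" using lnr by (simp add: pos_less_divide_eq)
    then show ?thesis using r M0 by auto
  qed
  define G where "G m = {t. good E n m t}" for m
  have Gopen: "open (G m)" for m unfolding G_def by (rule good_open)
  have Gdense: "closure (G m) = UNIV" for m
  proof -
    have "t0 \<in> closure (G m)" for t0
    proof (unfold closure_approachable, intro allI impI)
      fix e :: real assume e: "0 < e"
      obtain t where t: "\<forall>i<n. \<bar>t i - t0 i\<bar> \<le> e/4" "\<forall>i. n \<le> i \<longrightarrow> t i = t0 i" "good E n m t"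
        using local_good[OF EL L n1 s ns freq, of "e/4" t0 m] e by auto
      obtain N' where N': "(1/2::real)^N' < e/2" using real_arch_pow_inv[of "e/2" "1/2"] e by auto
      have all: "\<bar>t j - t0 j\<bar> \<le> e/4" for j using t(1,2) e by (cases "j < n") auto
      have fin: "finite {dist (t (from_nat k)) (t0 (from_nat k)) | k. k \<le> N'}" by simp
      have ne: "{dist (t (from_nat k)) (t0 (from_nat k)) | k. k \<le> N'} \<noteq> {}" by auto
      have "Max {dist (t (from_nat k)) (t0 (from_nat k)) | k. k \<le> N'} \<le> e/4"
        using all by (subst Max_le_iff[OF fin ne]) (auto simp: dist_real_def)
      then have "dist t t0 < e"
        using dist_fun_le_dist_first_terms[of t t0 N'] N' by linarith
      then show "\<exists>y\<in>G m. dist y t0 < e" using t(3) unfolding G_def by blast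
    qed
    then show ?thesis by auto
  qed
  have "euclidean closure_of \<Inter>(range G) = topspace euclidean"
    by (rule Baire_category) (auto simp: completely_metrizable_space_euclidean Gopen Gdense)
  then have "closure (\<Inter>(range G)) = UNIV" by simp
  then have "\<Inter>(range G) \<noteq> {}" by (metis closure_empty UNIV_not_empty)
  then obtain t where "t \<in> \<Inter>(range G)" by blast
  then have t: "\<forall>m. good E n m t" unfolding G_def by blast
  have img: "vv n t ` {x. \<forall>i<n. x i \<in> E} = lin_image_power t n E"
    unfolding lin_image_power_def vv_def by auto
  have "closure (quotient_set (vv n t ` {x. \<forall>i<n. x i \<in> E})) = UNIV"
    by (rule ratio_dense) (use t in \<open>auto simp: good_def\<close>)
  then show ?thesis using img by metis
qed


theorem mainTheorem2:
  fixes E :: "real set"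
  assumes "bounded E"
    and "upper_minkowski_dim E > 0"
  shows "\<exists>(n::nat) (t::nat \<Rightarrow> real). closure (quotient_set (lin_image_power t n E)) = UNIV"
  using main_result[OF assms] .

end
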